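(* Let $r<\min\{m,n\}$ and $\mathcal{M}_\mathbb{C}=\{X\in\mathbb{C}^{m\times n}:\operatorname{rank}_\mathbb{C}X\le r\}$. There is a Zariski-open dense set $\mathcal{U}_3\subset\mathcal{M}_\mathbb{C}$ such that for every $X=[x_1\cdots x_n]\in\mathcal{U}_3$, every $j\in[n]$, every set $\mathcal{J}=\{j_1,\dots,j_r\}\subseteq[n]$ of $r$ distinct indices with $j\notin\mathcal{J}$, and every $\Pi_1,\dots,\Pi_r\in\mathcal{P}_m$ not all equal to $I_m$, we have $\operatorname{rank}[x_j\ \Pi_1x_{j_1}\ \cdots\ \Pi_rx_{j_r}]=r+1$.
   Context: $\mathcal{P}_m$ is the set of $m\times m$ permutation matrices, $I_m$ the identity. $\mathcal{M}_\mathbb{C}$ carries the Zariski topology. *)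

theory Defs
  imports "Jordan_Normal_Form.DL_Rank"
begin

inductive_set poly_fun :: "nat \<Rightarrow> nat \<Rightarrow> (complex mat \<Rightarrow> complex) set"
  for m n :: nat where
  const: "(\<lambda>X. c) \<in> poly_fun m n"
| coord: "i < m \<Longrightarrow> j < n \<Longrightarrow> (\<lambda>X. X $$ (i, j)) \<in> poly_fun m n"
| add: "f \<in> poly_fun m n \<Longrightarrow> g \<in> poly_fun m n \<Longrightarrow> (\<lambda>X. f X + g X) \<in> poly_fun m n"
| mult: "f \<in> poly_fun m n \<Longrightarrow> g \<in> poly_fun m n \<Longrightarrow> (\<lambda>X. f X * g X) \<in> poly_fun m n"

definition low_rank_var :: "nat \<Rightarrow> nat \<Rightarrow> nat \<Rightarrow> complex mat set" where
  "low_rank_var m n r = {X \<in> carrier_mat m n. vec_space.rank m X \<le> r}"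

definition zariski_closed_in :: "nat \<Rightarrow> nat \<Rightarrow> complex mat set \<Rightarrow> complex mat set \<Rightarrow> bool" where
  "zariski_closed_in m n M Z \<longleftrightarrow>
     (\<exists>F. F \<subseteq> poly_fun m n \<and> Z = {X \<in> M. \<forall>f\<in>F. f X = 0})"

definition zariski_open_in :: "nat \<Rightarrow> nat \<Rightarrow> complex mat set \<Rightarrow> complex mat set \<Rightarrow> bool" where
  "zariski_open_in m n M U \<longleftrightarrow> U \<subseteq> M \<and> zariski_closed_in m n M (M - U)"

definition zariski_dense_in :: "nat \<Rightarrow> nat \<Rightarrow> complex mat set \<Rightarrow> complex mat set \<Rightarrow> bool" where
  "zariski_dense_in m n M U \<longleftrightarrow> U \<subseteq> M \<and>
     (\<forall>Z. zariski_closed_in m n M Z \<and> U \<subseteq> Z \<longrightarrow> Z = M)"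

definition perm_mats :: "nat \<Rightarrow> complex mat set" where
  "perm_mats m = {P. \<exists>\<sigma>. \<sigma> permutes {..<m} \<and>
     P = mat m m (\<lambda>(i, j). if \<sigma> i = j then 1 else 0)}"

end

theory Submission
  imports Defs
begin


lemma factor_low_rank:
  fixes X :: "complex mat"
  assumes X: "X \<in> carrier_mat m n" and rk: "vec_space.rank m X \<le> r"
  shows "\<exists>A B. A \<in> carrier_mat m r \<and> B \<in> carrier_mat r n \<and> X = A * B"
proof -
  interpret V: vec_space "TYPE(complex)" m .
  obtain S where maxS: "maximal S (\<lambda>T. T \<subseteq> set (cols X) \<and> V.lin_indpt T)"
    using maximal_exists[of "(\<lambda>T. T \<subseteq> set (cols X) \<and> V.lin_indpt T)" "card (set (cols X))" "{}"]
    by (meson List.finite_set card_mono empty_iff empty_subsetI V.finite_lin_indpt2 rev_finite_subset)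
  have cardS: "card S \<le> r" using V.rank_card_indpt[OF X maxS] rk by simp
  have Ssub: "S \<subseteq> set (cols X)" and Sind: "V.lin_indpt S" using maxS unfolding maximal_def by auto
  have colsC: "set (cols X) \<subseteq> carrier_vec m" using X cols_dim by blast
  have finS: "finite S" using Ssub finite_subset by blast
  have SC: "S \<subseteq> carrier_vec m" using Ssub colsC by blast
  have inspan: "c \<in> V.span S" if c: "c \<in> set (cols X)" for c
  proof (cases "c \<in> S")
    case True then show ?thesis using V.in_own_span[OF SC] by auto
  next
    case False
    have "\<not> V.lin_indpt (S \<union> {c})"
    proof
      assume "V.lin_indpt (S \<union> {c})"
      then have "S \<union> {c} = S" using maxS c Ssub unfolding maximal_def by blast
      then show False using False by blast
    qed
    then show ?thesis using V.lin_dep_iff_in_span[OF SC Sind _ False] c colsC by auto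
  qed
  obtain ws where ws: "set ws = S" "distinct ws" using finite_distinct_list[OF finS] by blast
  have lws: "length ws \<le> r" using ws cardS distinct_card by metis
  define ws' where "ws' = ws @ replicate (r - length ws) (0\<^sub>v m)"
  have lws': "length ws' = r" using lws unfolding ws'_def by simp
  have ws'C: "set ws' \<subseteq> carrier_vec m" using ws SC unfolding ws'_def by auto
  have Sws': "S \<subseteq> set ws'" using ws unfolding ws'_def by auto
  have "\<forall>j<n. \<exists>c. col X j = mat_of_cols m ws' *\<^sub>v vec r c"
  proof (intro allI impI)
    fix j assume j: "j < n"
    have "col X j \<in> set (cols X)" using j X by (simp add: cols_def)
    then have "col X j \<in> V.span (set ws')" using inspan V.span_is_monotone[OF Sws'] by blast
    then have "col X j \<in> V.span_list ws'" using V.span_list_as_span[OF ws'C] by simp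
    then obtain c where "col X j = V.lincomb_list c ws'" by (metis V.in_span_listE)
    then have "col X j = mat_of_cols m ws' *\<^sub>v vec r c"
    proof -
      have "\<forall>w\<in>set ws'. dim_vec w = m" using ws'C by auto
      from V.lincomb_list_as_mat_mult[OF this, of c] show ?thesis using lws' \<open>col X j = V.lincomb_list c ws'\<close> by simp
    qed
    then show "\<exists>c. col X j = mat_of_cols m ws' *\<^sub>v vec r c" by blast
  qed
  then obtain cf where cf: "\<And>j. j < n \<Longrightarrow> col X j = mat_of_cols m ws' *\<^sub>v vec r (cf j)" by metis
  define A where "A = mat_of_cols m ws'"
  define B where "B = mat r n (\<lambda>(k, j). cf j k)"
  have AC: "A \<in> carrier_mat m r" unfolding A_def using lws' by (simp add: mat_of_cols_def)
  have BC: "B \<in> carrier_mat r n" unfolding B_def by simp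
  have "X = A * B"
  proof (rule eq_matI)
    fix i j assume i: "i < dim_row (A * B)" and j: "j < dim_col (A * B)"
    then have i': "i < m" and j': "j < n" using AC BC by auto
    have cB: "col B j = vec r (cf j)" unfolding B_def using j' by (auto simp: col_def)
    have "(A * B) $$ (i, j) = row A i \<bullet> col B j" using i j by simp
    also have "\<dots> = (A *\<^sub>v vec r (cf j)) $ i" using i' AC cB by simp
    also have "\<dots> = col X j $ i" using cf[OF j'] A_def by simp
    also have "\<dots> = X $$ (i, j)" using X i' j' by simp
    finally show "X $$ (i, j) = (A * B) $$ (i, j)" by simp
  qed (use X AC BC in auto)
  then show ?thesis using AC BC by blast
qed



lemma (in vec_space) mult_in_span_cols:
  assumes A: "A \<in> carrier_mat n k" and v: "v \<in> carrier_vec k"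
  shows "A *\<^sub>v v \<in> span (set (cols A))"
proof -
  have d: "\<forall>w\<in>set (cols A). dim_vec w = n" using A by (auto simp: cols_def)
  have "lincomb_list (\<lambda>i. v $ i) (cols A) = mat_of_cols n (cols A) *\<^sub>v vec (length (cols A)) (\<lambda>i. v $ i)"
    using lincomb_list_as_mat_mult[OF d] by blast
  also have "\<dots> = A *\<^sub>v v"
  proof -
    have "vec (length (cols A)) (\<lambda>i. v $ i) = v" using A v by (intro eq_vecI) auto
    moreover have "mat_of_cols n (cols A) = A" using A mat_of_cols_cols[of A] by auto
    ultimately show ?thesis by simp
  qed
  finally have "A *\<^sub>v v = lincomb_list (\<lambda>i. v $ i) (cols A)" by simp
  then have "A *\<^sub>v v \<in> span_list (cols A)" by (auto simp: span_list_def)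
  moreover have "set (cols A) \<subseteq> carrier_vec n" using A cols_dim by blast
  ultimately show ?thesis using span_list_as_span[of "cols A"] by simp
qed

lemma (in vec_space) rank_mult_le:
  assumes A: "A \<in> carrier_mat n k" and B: "B \<in> carrier_mat k nc"
  shows "rank (A * B) \<le> rank A"
proof -
  define W where "W = span (set (cols A))"
  have sub: "set (cols (A * B)) \<subseteq> W"
  proof
    fix x assume "x \<in> set (cols (A * B))"
    then obtain i where i: "i < nc" "x = col (A * B) i" using A B by (auto simp: cols_def)
    then have "x = A *\<^sub>v col B i" using i(2) col_mult2[OF A B i(1)] by (simp only:)
    then show "x \<in> W" unfolding W_def using mult_in_span_cols[OF A] B i by auto
  qed
  have WS: "subspace class_ring W V" unfolding W_def
    using A cols_dim carrier_matD(1) span_is_subspace by blast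
  then have "span (set (cols (A * B))) \<subseteq> W"
    by (simp add: sub span_is_subset)
  have ABS: "subspace class_ring (span (set (cols (A * B)))) V"
    proof -
    have "A * B \<in> carrier_mat n nc" using A B by simp
    then have "set (cols (A * B)) \<subseteq> carrier_vec n" using cols_dim by blast
    then show ?thesis using span_is_subspace by blast
  qed
  have subspace: "subspace class_ring (span (set (cols (A * B)))) (vs W)"
    using nested_subspaces[OF WS ABS \<open>span (set (cols (A * B))) \<subseteq> W\<close>] .
  have fW: "vectorspace.fin_dim class_ring (vs W)" using W_def A fin_dim_span_cols by auto
  have "vectorspace.fin_dim class_ring (span_vs (set (cols (A * B))))"
    using A B mult_carrier_mat fin_dim_span_cols by blast
  then have "rank (A * B) \<le> vectorspace.dim class_ring (vs W)" unfolding rank_def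
    using vectorspace.subspace_dim[OF subspace_is_vs[OF WS] subspace fW] by auto
  also have "\<dots> = rank A" unfolding rank_def W_def by simp
  finally show ?thesis .
qed



lemma pf_sum:
  assumes "finite S" "\<And>s. s \<in> S \<Longrightarrow> f s \<in> poly_fun m n"
  shows "(\<lambda>X. \<Sum>s\<in>S. f s X) \<in> poly_fun m n"
  using assms
proof (induction S rule: finite_induct)
  case empty then show ?case using poly_fun.const[of 0] by simp
next
  case (insert x F)
  then show ?case using poly_fun.add[of "f x" m n "\<lambda>X. \<Sum>s\<in>F. f s X"] by simp
qed

lemma pf_prod:
  assumes "finite S" "\<And>s. s \<in> S \<Longrightarrow> f s \<in> poly_fun m n"
  shows "(\<lambda>X. \<Prod>s\<in>S. f s X) \<in> poly_fun m n"
  using assms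
proof (induction S rule: finite_induct)
  case empty then show ?case using poly_fun.const[of 1] by simp
next
  case (insert x F)
  then show ?case using poly_fun.mult[of "f x" m n "\<lambda>X. \<Prod>s\<in>F. f s X"] by simp
qed

lemma pf_cmult:
  assumes "f \<in> poly_fun m n"
  shows "(\<lambda>X. c * f X) \<in> poly_fun m n"
  using poly_fun.mult[OF poly_fun.const assms] by simp

lemma pf_det:
  assumes dims: "\<And>X. F X \<in> carrier_mat k k"
    and ent: "\<And>i l. i < k \<Longrightarrow> l < k \<Longrightarrow> (\<lambda>X. F X $$ (i, l)) \<in> poly_fun m n"
  shows "(\<lambda>X. det (F X)) \<in> poly_fun m n"
proof -
  have eq: "det (F X) = (\<Sum>p\<in>{p. p permutes {0..<k}}. signof p * (\<Prod>i = 0..<k. F X $$ (i, p i)))" for X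
    using dims[of X] unfolding det_def by auto
  have "(\<lambda>X. \<Sum>p\<in>{p. p permutes {0..<k}}. signof p * (\<Prod>i = 0..<k. F X $$ (i, p i))) \<in> poly_fun m n"
  proof (rule pf_sum)
    show "finite {p. p permutes {0..<k}}" by (simp add: finite_permutations)
    fix p assume "p \<in> {p. p permutes {0..<k}}"
    then have p: "p permutes {0..<k}" by simp
    have "(\<lambda>X. \<Prod>i = 0..<k. F X $$ (i, p i)) \<in> poly_fun m n"
    proof (rule pf_prod)
      fix i assume "i \<in> {0..<k}"
      then show "(\<lambda>X. F X $$ (i, p i)) \<in> poly_fun m n"
        using ent permutes_in_image[OF p] by auto
    qed simp
    then show "(\<lambda>X. signof p * (\<Prod>i = 0..<k. F X $$ (i, p i))) \<in> poly_fun m n"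
      by (rule pf_cmult)
  qed
  then show ?thesis unfolding eq .
qed

lemma pf_path:
  assumes "g \<in> poly_fun m n"
    and "\<And>i j. i < m \<Longrightarrow> j < n \<Longrightarrow> \<exists>p. \<forall>t. \<gamma> t $$ (i, j) = poly p t"
  shows "\<exists>q. \<forall>t. g (\<gamma> t) = poly q t"
  using assms
proof (induction g rule: poly_fun.induct)
  case (const c) then show ?case by (intro exI[of _ "[:c:]"]) simp
next
  case (coord i j) then show ?case by blast
next
  case (add f g)
  then obtain p q where "\<forall>t. f (\<gamma> t) = poly p t" "\<forall>t. g (\<gamma> t) = poly q t" by blast
  then show ?case by (intro exI[of _ "p + q"]) simp
next
  case (mult f g)
  then obtain p q where "\<forall>t. f (\<gamma> t) = poly p t" "\<forall>t. g (\<gamma> t) = poly q t" by blast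
  then show ?case by (intro exI[of _ "p * q"]) simp
qed

lemma rank_from_det:
  fixes N W :: "complex mat"
  assumes N: "N \<in> carrier_mat m k" and W: "W \<in> carrier_mat k m" and d: "det (W * N) \<noteq> 0"
  shows "vec_space.rank m N = k"
proof -
  interpret V: vec_space "TYPE(complex)" m .
  have WN: "W * N \<in> carrier_mat k k" using N W by simp
  have dist: "distinct (cols N)"
  proof (rule ccontr)
    assume "\<not> distinct (cols N)"
    then obtain i j where "i\<noteq>j" "(cols N) ! i = (cols N) ! j" "i<length (cols N)" "j<length (cols N)"
      using distinct_conv_nth by blast
    then have ij: "col N i = col N j" "i<k" "j<k" using N by auto
    have "col (W * N) i = col (W * N) j" using ij N W by simp
    then have "det (W * N) = 0" using det_identical_cols[OF WN \<open>i \<noteq> j\<close>] ij by blast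
    then show False using d by simp
  qed
  have nz: "N *\<^sub>v v \<noteq> 0\<^sub>v m" if v: "v \<in> carrier_vec k" "v \<noteq> 0\<^sub>v k" for v
  proof
    assume "N *\<^sub>v v = 0\<^sub>v m"
    moreover have "W *\<^sub>v 0\<^sub>v m = 0\<^sub>v k" using W by (intro eq_vecI) (auto simp: scalar_prod_def)
    ultimately have "(W * N) *\<^sub>v v = 0\<^sub>v k" using N W v by simp
    then have "det (W * N) = 0" using det_0_iff_vec_prod_zero_field[OF WN] v by blast
    then show False using d by simp
  qed
  have "V.lin_indpt (set (cols N))" using V.lin_depE[OF N _ dist] nz by metis
  then show ?thesis using V.lin_indpt_full_rank[OF N dist] by metis
qed



definition lin :: "complex mat \<Rightarrow> complex mat \<Rightarrow> complex \<Rightarrow> complex mat" where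
  "lin A A1 t = A + t \<cdot>\<^sub>m (A1 - A)"

lemma lin_carrier: "A \<in> carrier_mat a b \<Longrightarrow> A1 \<in> carrier_mat a b \<Longrightarrow> lin A A1 t \<in> carrier_mat a b"
  unfolding lin_def by (simp add: minus_carrier_mat)

lemma lin_0: "A \<in> carrier_mat a b \<Longrightarrow> A1 \<in> carrier_mat a b \<Longrightarrow> lin A A1 0 = A"
  unfolding lin_def by (intro eq_matI) auto

lemma lin_1: "A \<in> carrier_mat a b \<Longrightarrow> A1 \<in> carrier_mat a b \<Longrightarrow> lin A A1 1 = A1"
  unfolding lin_def by (intro eq_matI) auto

lemma gamma_poly:
  assumes A: "A \<in> carrier_mat m r" "A1 \<in> carrier_mat m r"
    and B: "B \<in> carrier_mat r n" "B1 \<in> carrier_mat r n" and i: "i < m" and j: "j < n"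
  shows "\<exists>p. \<forall>t. (lin A A1 t * lin B B1 t) $$ (i, j) = poly p t"
proof (intro exI allI)
  fix t
  show "(lin A A1 t * lin B B1 t) $$ (i, j) =
    poly (\<Sum>k\<in>{0..<r}. [:A $$ (i,k), A1 $$ (i,k) - A $$ (i,k):] * [:B $$ (k,j), B1 $$ (k,j) - B $$ (k,j):]) t"
    using A B i j unfolding lin_def
    by (simp add: poly_sum scalar_prod_def algebra_simps)
qed

lemma finite_zeros:
  assumes f: "f \<in> poly_fun m n"
    and A: "A \<in> carrier_mat m r" "A1 \<in> carrier_mat m r"
    and B: "B \<in> carrier_mat r n" "B1 \<in> carrier_mat r n"
    and nz: "f (lin A A1 t0 * lin B B1 t0) \<noteq> 0"
  shows "finite {t. f (lin A A1 t * lin B B1 t) = 0}"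
proof -
  obtain q where q: "\<forall>t. f (lin A A1 t * lin B B1 t) = poly q t"
    using pf_path[OF f, of "\<lambda>t. lin A A1 t * lin B B1 t"] gamma_poly[OF A B] by blast
  then have "q \<noteq> 0" using nz by auto
  then show ?thesis using poly_roots_finite[of q] q by simp
qed

lemma common_point:
  assumes "finite I"
    and "\<And>i. i \<in> I \<Longrightarrow> g i \<in> poly_fun m n"
    and "\<And>i. i \<in> I \<Longrightarrow> \<exists>A\<in>carrier_mat m r. \<exists>B\<in>carrier_mat r n. g i (A * B) \<noteq> 0"
  shows "\<exists>A\<in>carrier_mat m r. \<exists>B\<in>carrier_mat r n. \<forall>i\<in>I. g i (A * B) \<noteq> 0"
  using assms
proof (induction I rule: finite_induct)
  case empty
  show ?case by (intro bexI[of _ "0\<^sub>m m r"] bexI[of _ "0\<^sub>m r n"]) auto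
next
  case (insert x I)
  then obtain A0 B0 where A0: "A0 \<in> carrier_mat m r" and B0: "B0 \<in> carrier_mat r n"
    and h0: "\<forall>i\<in>I. g i (A0 * B0) \<noteq> 0" by (metis insert_iff)
  obtain A1 B1 where A1: "A1 \<in> carrier_mat m r" and B1: "B1 \<in> carrier_mat r n"
    and h1: "g x (A1 * B1) \<noteq> 0" using insert.prems by blast
  define Bad where "Bad = (\<Union>i\<in>insert x I. {t. g i (lin A0 A1 t * lin B0 B1 t) = 0})"
  have "finite Bad" unfolding Bad_def
  proof (intro finite_UN_I)
    show "finite (insert x I)" using insert by simp
    fix i assume i: "i \<in> insert x I"
    show "finite {t. g i (lin A0 A1 t * lin B0 B1 t) = 0}"
    proof (cases "i = x")
      case True
      then show ?thesis using finite_zeros[OF insert.prems(1)[OF i] A0 A1 B0 B1, of 1] h1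
        lin_1[OF A0 A1] lin_1[OF B0 B1] by simp
    next
      case False
      then have "i \<in> I" using i by simp
      then show ?thesis using finite_zeros[OF insert.prems(1)[OF i] A0 A1 B0 B1, of 0] h0
        lin_0[OF A0 A1] lin_0[OF B0 B1] by simp
    qed
  qed
  then obtain t where "t \<notin> Bad" using ex_new_if_finite[OF infinite_UNIV_char_0] by blast
  then show ?case unfolding Bad_def
    by (intro bexI[of _ "lin A0 A1 t"] bexI[of _ "lin B0 B1 t"]) (auto intro: lin_carrier A0 A1 B0 B1)
qed

lemma density_core:
  assumes "finite I"
    and g: "\<And>i. i \<in> I \<Longrightarrow> g i \<in> poly_fun m n"
    and "\<And>i. i \<in> I \<Longrightarrow> \<exists>A\<in>carrier_mat m r. \<exists>B\<in>carrier_mat r n. g i (A * B) \<noteq> 0"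
    and f: "f \<in> poly_fun m n"
    and van: "\<And>A B. A \<in> carrier_mat m r \<Longrightarrow> B \<in> carrier_mat r n \<Longrightarrow> (\<forall>i\<in>I. g i (A * B) \<noteq> 0) \<Longrightarrow> f (A * B) = 0"
    and A: "A \<in> carrier_mat m r" and B: "B \<in> carrier_mat r n"
  shows "f (A * B) = 0"
proof -
  obtain A1 B1 where A1: "A1 \<in> carrier_mat m r" and B1: "B1 \<in> carrier_mat r n"
    and h1: "\<forall>i\<in>I. g i (A1 * B1) \<noteq> 0" using common_point[of I g m n r] assms(1,2,3) by blast
  define Bad where "Bad = (\<Union>i\<in>I. {t. g i (lin A A1 t * lin B B1 t) = 0})"
  have "finite Bad" unfolding Bad_def
  proof (intro finite_UN_I)
    show "finite I" by fact
    fix i assume i: "i \<in> I"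
    show "finite {t. g i (lin A A1 t * lin B B1 t) = 0}"
      using finite_zeros[OF g[OF i] A A1 B B1, of 1] h1 i lin_1[OF A A1] lin_1[OF B B1] by simp
  qed
  obtain q where q: "\<forall>t. f (lin A A1 t * lin B B1 t) = poly q t"
    using pf_path[OF f, of "\<lambda>t. lin A A1 t * lin B B1 t"] gamma_poly[OF A A1 B B1] by blast
  have "UNIV - Bad \<subseteq> {t. poly q t = 0}"
  proof
    fix t assume "t \<in> UNIV - Bad"
    then have "\<forall>i\<in>I. g i (lin A A1 t * lin B B1 t) \<noteq> 0" unfolding Bad_def by blast
    then have "f (lin A A1 t * lin B B1 t) = 0"
      using van lin_carrier[OF A A1] lin_carrier[OF B B1] by blast
    then show "t \<in> {t. poly q t = 0}" using q by simp
  qed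
  moreover have "infinite (UNIV - Bad)" using \<open>finite Bad\<close> infinite_UNIV_char_0 Diff_infinite_finite by blast
  ultimately have "infinite {t. poly q t = 0}" using finite_subset by blast
  then have "q = 0" using poly_roots_finite by blast
  then have "f (lin A A1 0 * lin B B1 0) = 0" using q by simp
  then show ?thesis using lin_0[OF A A1] lin_0[OF B B1] by simp
qed



definition NN :: "nat \<Rightarrow> nat \<Rightarrow> nat \<times> nat list \<times> (nat \<Rightarrow> nat) list \<Rightarrow> complex mat \<Rightarrow> complex mat" where
  "NN m r c X = mat m (Suc r) (\<lambda>(i, l). if l = 0 then X $$ (i, fst c)
      else X $$ ((snd (snd c) ! (l - 1)) i, fst (snd c) ! (l - 1)))"

definition combos :: "nat \<Rightarrow> nat \<Rightarrow> nat \<Rightarrow> (nat \<times> nat list \<times> (nat \<Rightarrow> nat) list) set" where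
  "combos m n r = {(j, Js, ss). j < n \<and> length Js = r \<and> set Js \<subseteq> {..<n} \<and> distinct Js \<and> j \<notin> set Js
      \<and> length ss = r \<and> (\<forall>\<sigma>\<in>set ss. \<sigma> permutes {..<m}) \<and> (\<exists>\<sigma>\<in>set ss. \<sigma> \<noteq> id)}"

lemma finite_combos: "finite (combos m n r)"
proof -
  have "combos m n r \<subseteq> {..<n} \<times> {Js. set Js \<subseteq> {..<n} \<and> length Js = r}
     \<times> {ss. set ss \<subseteq> {\<sigma>. \<sigma> permutes {..<m}} \<and> length ss = r}"
    unfolding combos_def by auto
  moreover have "finite ({..<n} \<times> {Js. set Js \<subseteq> {..<n} \<and> length Js = r}
     \<times> {ss. set ss \<subseteq> {\<sigma>. \<sigma> permutes {..<m}} \<and> length ss = r})"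
    by (intro finite_cartesian_product finite_lists_length_eq finite_lessThan finite_permutations)
  ultimately show ?thesis using finite_subset by blast
qed

lemma NN_carrier: "NN m r c X \<in> carrier_mat m (Suc r)"
  unfolding NN_def by simp

lemma pf_NN_entry:
  assumes c: "c \<in> combos m n r" and k: "k < m" and l: "l < Suc r"
  shows "(\<lambda>X. NN m r c X $$ (k, l)) \<in> poly_fun m n"
proof -
  obtain j Js ss where cc: "c = (j, Js, ss)" by (cases c) auto
  note cs = c[unfolded cc combos_def, simplified]
  show ?thesis
  proof (cases "l = 0")
    case True
    then show ?thesis using k l cs unfolding NN_def cc by (simp add: poly_fun.coord)
  next
    case False
    then have l1: "l - 1 < r" using l by simp
    then have "ss ! (l - 1) \<in> set ss" "Js ! (l - 1) \<in> set Js" using cs by auto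
    then have "(ss ! (l - 1)) k < m" "Js ! (l - 1) < n"
      using cs k permutes_in_image[of "ss ! (l - 1)" "{..<m}" k] by auto
    then show ?thesis using k l False unfolding NN_def cc by (simp add: poly_fun.coord)
  qed
qed

lemma pf_det_NN:
  assumes c: "c \<in> combos m n r" and W: "W \<in> carrier_mat (Suc r) m"
  shows "(\<lambda>X. det (W * NN m r c X)) \<in> poly_fun m n"
proof (rule pf_det[where k = "Suc r"])
  fix X show "W * NN m r c X \<in> carrier_mat (Suc r) (Suc r)" using W NN_carrier[of m r c X] by simp
next
  fix i l assume i: "i < Suc r" and l: "l < Suc r"
  have eq: "(W * NN m r c X) $$ (i, l) = (\<Sum>k\<in>{0..<m}. W $$ (i, k) * NN m r c X $$ (k, l))" for X
    using W i l NN_carrier[of m r c X] by (simp add: scalar_prod_def)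
  show "(\<lambda>X. (W * NN m r c X) $$ (i, l)) \<in> poly_fun m n"
    unfolding eq by (intro pf_sum pf_cmult pf_NN_entry[OF c _ l]) auto
qed



lemma witness:
  assumes c: "c \<in> combos m n r" and rm: "r < m"
  shows "\<exists>W\<in>carrier_mat (Suc r) m. \<exists>A\<in>carrier_mat m r. \<exists>B\<in>carrier_mat r n.
           det (W * NN m r c (A * B)) \<noteq> 0"
proof -
  obtain j Js ss where cc: "c = (j, Js, ss)" by (cases c) auto
  note cs = c[unfolded cc combos_def, simplified]
  have j: "j < n" and lJs: "length Js = r" and Jsn: "set Js \<subseteq> {..<n}" and dJs: "distinct Js"
    and jJs: "j \<notin> set Js" and lss: "length ss = r" and perm: "\<And>\<sigma>. \<sigma> \<in> set ss \<Longrightarrow> \<sigma> permutes {..<m}"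
    using cs by auto
  obtain \<sigma>0 where s0: "\<sigma>0 \<in> set ss" "\<sigma>0 \<noteq> id" using cs by auto
  then obtain k0 where k0: "k0 < r" "ss ! k0 = \<sigma>0" using lss by (metis in_set_conv_nth)
  obtain p where p: "\<sigma>0 p \<noteq> p" using s0 by (metis eq_id_iff)
  have p0: "\<sigma>0 permutes {..<m}" using perm s0 by blast
  have pm: "p < m" using p permutes_not_in[OF p0] by auto
  define h where "h = \<sigma>0 p"
  have hm: "h < m" unfolding h_def using permutes_in_image[OF p0] pm by auto
  have hp: "h \<noteq> p" unfolding h_def using p by simp
  have "card ({..<r} - {k0}) \<le> card ({..<m} - {h, p})"
    using k0 hm pm hp rm by (simp add: card_Diff_subset)
  then obtain f where f: "f ` ({..<r} - {k0}) \<subseteq> {..<m} - {h, p}" "inj_on f ({..<r} - {k0})"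
    using card_le_inj[of "{..<r} - {k0}" "{..<m} - {h, p}"] by auto
  define t where "t = f(k0 := p)"
  have tm: "t k < m" if "k < r" for k using f that pm unfolding t_def by (cases "k = k0") auto
  have fk: "f k \<noteq> p" "f k \<noteq> h" "f k < m" if "k < r" "k \<noteq> k0" for k
    using f(1) that by auto
  have tinj: "t k = t k' \<longleftrightarrow> k = k'" if kk: "k < r" "k' < r" for k k'
  proof (cases "k = k0")
    case True
    show ?thesis
    proof (cases "k' = k0")
      case False then show ?thesis using True fk[OF kk(2)] unfolding t_def by auto
    qed (use True in simp)
  next
    case False
    show ?thesis
    proof (cases "k' = k0")
      case True then show ?thesis using False fk[OF kk(1)] unfolding t_def by auto
    next
      case F2: False
      have "f k = f k' \<longleftrightarrow> k = k'" using f(2) kk False F2 unfolding inj_on_def by blast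
      then show ?thesis using False F2 unfolding t_def by simp
    qed
  qed
  have th: "t k \<noteq> h" if "k < r" for k using f that hp unfolding t_def by (cases "k = k0") auto
  have sigp: "\<And>k. k < r \<Longrightarrow> (ss ! k) permutes {..<m}" using perm lss by auto
  define A :: "complex mat" where "A = mat m r (\<lambda>(i, k). if i = (ss ! k) (t k) then 1 else 0)"
  define B :: "complex mat" where "B = mat r n (\<lambda>(k, l). if l = Js ! k then 1 else if l = j \<and> k = k0 then 1 else 0)"
  have AC: "A \<in> carrier_mat m r" and BC: "B \<in> carrier_mat r n" unfolding A_def B_def by auto
  have BJ: "B $$ (k, Js ! k') = (if k = k' then 1 else 0)" if "k < r" "k' < r" for k k'
  proof -
    have "Js ! k' < n" using Jsn that lJs nth_mem by fastforce
    moreover have "Js ! k' \<noteq> j" using jJs that lJs nth_mem by fastforce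
    moreover have "Js ! k = Js ! k' \<longleftrightarrow> k = k'" using dJs that lJs nth_eq_iff_index_eq by metis
    ultimately show ?thesis unfolding B_def using that by auto
  qed
  have Bj: "B $$ (k, j) = (if k = k0 then 1 else 0)" if "k < r" for k
  proof -
    have "Js ! k \<noteq> j" using jJs that lJs nth_mem by fastforce
    then show ?thesis unfolding B_def using that j by auto
  qed
  define Y where "Y = A * B"
  have YJ: "Y $$ (i, Js ! k') = A $$ (i, k')" if "i < m" "k' < r" for i k'
  proof -
    have "Js ! k' < n" using Jsn that lJs nth_mem by fastforce
    then have "Y $$ (i, Js ! k') = (\<Sum>k\<in>{0..<r}. A $$ (i, k) * B $$ (k, Js ! k'))"
      unfolding Y_def using AC BC that by (simp add: scalar_prod_def)
    also have "\<dots> = (\<Sum>k\<in>{0..<r}. if k = k' then A $$ (i, k) else 0)"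
      by (intro sum.cong) (auto simp: BJ that)
    also have "\<dots> = A $$ (i, k')" using that by simp
    finally show ?thesis .
  qed
  have Yj: "Y $$ (i, j) = A $$ (i, k0)" if "i < m" for i
  proof -
    have "Y $$ (i, j) = (\<Sum>k\<in>{0..<r}. A $$ (i, k) * B $$ (k, j))"
      unfolding Y_def using AC BC that j by (simp add: scalar_prod_def)
    also have "\<dots> = (\<Sum>k\<in>{0..<r}. if k = k0 then A $$ (i, k) else 0)"
      by (intro sum.cong) (auto simp: Bj that)
    also have "\<dots> = A $$ (i, k0)" using k0 by simp
    finally show ?thesis .
  qed
  define u where "u = (\<lambda>l. if l = 0 then h else t (l - 1))"
  have um: "u l < m" if "l < Suc r" for l using that hm tm unfolding u_def by auto
  have uinj: "u a = u b \<longleftrightarrow> a = b" if "a < Suc r" "b < Suc r" for a b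
  proof (cases "a = 0")
    case True
    then show ?thesis
    proof (cases "b = 0")
      case False
      then have "b - 1 < r" using that by simp
      then show ?thesis using False True th[of "b - 1"] that unfolding u_def by auto
    qed simp
  next
    case False
    show ?thesis
    proof (cases "b = 0")
      case True
      have "a - 1 < r" using that False by simp
      then show ?thesis using False True th[of "a - 1"] that unfolding u_def by auto
    next
      case F2: False
      have "t (a - 1) = t (b - 1) \<longleftrightarrow> a - 1 = b - 1" using tinj[of "a - 1" "b - 1"] that False F2 by simp
      then show ?thesis using False F2 unfolding u_def by auto
    qed
  qed
  have Nent: "NN m r c Y $$ (i, l) = (if i = u l then 1 else 0)" if "i < m" "l < Suc r" for i l
  proof (cases "l = 0")
    case True
    have "A $$ (i, k0) = (if i = h then 1 else 0)" unfolding A_def h_def t_def using that k0 by simp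
    then show ?thesis using True that Yj unfolding NN_def cc u_def by simp
  next
    case False
    then have l1: "l - 1 < r" using that by simp
    have sp: "(ss ! (l - 1)) permutes {..<m}" using sigp[OF l1] .
    have "(ss ! (l - 1)) i < m" using permutes_in_image[OF sp] that by auto
    then have "NN m r c Y $$ (i, l) = A $$ ((ss ! (l - 1)) i, l - 1)"
      using False that YJ l1 unfolding NN_def cc by simp
    also have "\<dots> = (if (ss ! (l - 1)) i = (ss ! (l - 1)) (t (l - 1)) then 1 else 0)"
      unfolding A_def using \<open>(ss ! (l - 1)) i < m\<close> l1 by simp
    also have "\<dots> = (if i = t (l - 1) then 1 else 0)"
      using permutes_inj[OF sp] by (simp add: inj_eq)
    finally show ?thesis using False unfolding u_def by simp
  qed
  define W :: "complex mat" where "W = mat (Suc r) m (\<lambda>(l, i). if i = u l then 1 else 0)"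
  have WC: "W \<in> carrier_mat (Suc r) m" unfolding W_def by simp
  have "W * NN m r c Y = 1\<^sub>m (Suc r)"
  proof (rule eq_matI)
    fix a b assume a: "a < dim_row (1\<^sub>m (Suc r))" and b: "b < dim_col (1\<^sub>m (Suc r))"
    then have a': "a < Suc r" and b': "b < Suc r" by auto
    have "(W * NN m r c Y) $$ (a, b) = (\<Sum>i\<in>{0..<m}. W $$ (a, i) * NN m r c Y $$ (i, b))"
      using WC NN_carrier[of m r c Y] a' b' by (simp add: scalar_prod_def)
    also have "\<dots> = (\<Sum>i\<in>{0..<m}. if i = u a then (if u a = u b then 1 else 0) else 0)"
      by (intro sum.cong) (auto simp: W_def Nent a' b')
    also have "\<dots> = (if a = b then 1 else 0)" using um[OF a'] uinj[OF a' b'] by simp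
    finally show "(W * NN m r c Y) $$ (a, b) = 1\<^sub>m (Suc r) $$ (a, b)" using a' b' by simp
  qed (use WC NN_carrier[of m r c Y] in auto)
  then have "det (W * NN m r c (A * B)) \<noteq> 0" unfolding Y_def by simp
  then show ?thesis using WC AC BC by blast
qed



lemma pmat_mult_vec:
  fixes v :: "complex vec"
  assumes s: "\<sigma> permutes {..<m}" and v: "v \<in> carrier_vec m" and i: "i < m"
  shows "(mat m m (\<lambda>(i, j). if \<sigma> i = j then 1 else 0) *\<^sub>v v) $ i = v $ \<sigma> i"
proof -
  have si: "\<sigma> i < m" using permutes_in_image[OF s] i by auto
  have "(mat m m (\<lambda>(i, j). if \<sigma> i = j then 1 else 0) *\<^sub>v v) $ i
      = (\<Sum>s\<in>{0..<m}. (if \<sigma> i = s then 1 else 0) * v $ s)"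
    using v i by (simp add: scalar_prod_def)
  also have "\<dots> = (\<Sum>s\<in>{0..<m}. if s = \<sigma> i then v $ s else 0)" by (intro sum.cong) auto
  also have "\<dots> = v $ \<sigma> i" using si by simp
  finally show ?thesis .
qed

lemma combo_prop:
  fixes X :: "complex mat"
  assumes X: "X \<in> carrier_mat m n" and j: "j < n"
    and J: "\<forall>k<r. J k < n" "inj_on J {..<r}" "j \<notin> J ` {..<r}"
    and P: "\<forall>k<r. P k \<in> perm_mats m" "\<exists>k<r. P k \<noteq> 1\<^sub>m m"
  shows "\<exists>c\<in>combos m n r. mat_of_cols m (col X j # map (\<lambda>k. P k *\<^sub>v col X (J k)) [0..<r]) = NN m r c X"
proof -
  have "\<forall>k<r. \<exists>\<sigma>. \<sigma> permutes {..<m} \<and> P k = mat m m (\<lambda>(i, j). if \<sigma> i = j then 1 else 0)"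
    using P(1) unfolding perm_mats_def by blast
  then obtain sg where sg: "\<And>k. k < r \<Longrightarrow> sg k permutes {..<m} \<and> P k = mat m m (\<lambda>(i, j). if sg k i = j then 1 else 0)"
    by metis
  define c where "c = (j, map J [0..<r], map sg [0..<r])"
  have "c \<in> combos m n r"
  proof -
    have "distinct (map J [0..<r])" using J(2) by (simp add: distinct_map atLeast0LessThan)
    moreover have "set (map J [0..<r]) \<subseteq> {..<n}" using J(1) by auto
    moreover have "j \<notin> set (map J [0..<r])" using J(3) by (auto simp: atLeast0LessThan)
    moreover have "\<forall>\<sigma>\<in>set (map sg [0..<r]). \<sigma> permutes {..<m}" using sg by auto
    moreover have "\<exists>\<sigma>\<in>set (map sg [0..<r]). \<sigma> \<noteq> id"
    proof -
      obtain k where k: "k < r" "P k \<noteq> 1\<^sub>m m" using P(2) by blast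
      have "sg k \<noteq> id"
      proof
        assume "sg k = id"
        then have "P k = 1\<^sub>m m" using sg[OF k(1)] by (simp add: one_mat_def)
        then show False using k by simp
      qed
      then show ?thesis using k by auto
    qed
    ultimately show ?thesis unfolding c_def combos_def using j by auto
  qed
  moreover have "mat_of_cols m (col X j # map (\<lambda>k. P k *\<^sub>v col X (J k)) [0..<r]) = NN m r c X"
  proof (rule eq_matI)
    fix i l assume i: "i < dim_row (NN m r c X)" and l: "l < dim_col (NN m r c X)"
    then have i': "i < m" and l': "l < Suc r" using NN_carrier[of m r c X] by auto
    show "mat_of_cols m (col X j # map (\<lambda>k. P k *\<^sub>v col X (J k)) [0..<r]) $$ (i, l) = NN m r c X $$ (i, l)"
    proof (cases l)
      case 0
      then show ?thesis using i' X j unfolding c_def NN_def by (simp add: mat_of_cols_def)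
    next
      case (Suc l0)
      then have l0: "l0 < r" using l' by simp
      have cv: "col X (J l0) \<in> carrier_vec m" using X by (metis carrier_matD(1) col_dim)
      have "mat_of_cols m (col X j # map (\<lambda>k. P k *\<^sub>v col X (J k)) [0..<r]) $$ (i, l)
          = (P l0 *\<^sub>v col X (J l0)) $ i" using Suc i' l0 by (simp add: mat_of_cols_def)
      also have "\<dots> = col X (J l0) $ sg l0 i" using sg[OF l0] pmat_mult_vec[OF _ cv i'] by simp
      also have "\<dots> = X $$ (sg l0 i, J l0)"
        using X J(1) l0 permutes_in_image[of "sg l0" "{..<m}" i] sg[OF l0] i' by simp
      finally show ?thesis using Suc i' l0 unfolding c_def NN_def by simp
    qed
  qed (use NN_carrier[of m r c X] in auto)
  ultimately show ?thesis by blast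
qed

theorem lemma3:
  fixes m n r :: nat
  assumes "r < m" and "r < n"
  shows "\<exists>U. zariski_open_in m n (low_rank_var m n r) U \<and>
             zariski_dense_in m n (low_rank_var m n r) U \<and>
             (\<forall>X\<in>U. \<forall>j<n. \<forall>J :: nat \<Rightarrow> nat. \<forall>P :: nat \<Rightarrow> complex mat.
                (\<forall>k<r. J k < n) \<and> inj_on J {..<r} \<and> j \<notin> J ` {..<r} \<and>
                (\<forall>k<r. P k \<in> perm_mats m) \<and> (\<exists>k<r. P k \<noteq> 1\<^sub>m m)
                \<longrightarrow> vec_space.rank m
                      (mat_of_cols m (col X j # map (\<lambda>k. P k *\<^sub>v col X (J k)) [0..<r]))
                    = r + 1)"
proof -
  define M where "M = low_rank_var m n r"
  define C where "C = combos m n r"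
  define U where "U = {X \<in> M. \<forall>c\<in>C. \<exists>W\<in>carrier_mat (Suc r) m. det (W * NN m r c X) \<noteq> 0}"
  define F where "F = {f. \<exists>Wf. (\<forall>c\<in>C. Wf c \<in> carrier_mat (Suc r) m) \<and>
                              f = (\<lambda>X. \<Prod>c\<in>C. det (Wf c * NN m r c X))}"
  have finC: "finite C" unfolding C_def by (rule finite_combos)
  have FP: "F \<subseteq> poly_fun m n"
  proof
    fix f assume "f \<in> F"
    then obtain Wf where Wf: "\<forall>c\<in>C. Wf c \<in> carrier_mat (Suc r) m"
      and f: "f = (\<lambda>X. \<Prod>c\<in>C. det (Wf c * NN m r c X))" unfolding F_def by blast
    show "f \<in> poly_fun m n" unfolding f
      by (rule pf_prod[OF finC]) (use Wf pf_det_NN in \<open>auto simp: C_def\<close>)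
  qed
  have "M - U = {X \<in> M. \<forall>f\<in>F. f X = 0}"
  proof (intro equalityI subsetI)
    fix X assume X: "X \<in> M - U"
    then obtain c where c: "c \<in> C" and cz: "\<forall>W\<in>carrier_mat (Suc r) m. det (W * NN m r c X) = 0"
      unfolding U_def by auto
    have "f X = 0" if "f \<in> F" for f
    proof -
      obtain Wf where Wf: "\<forall>c\<in>C. Wf c \<in> carrier_mat (Suc r) m"
        and f: "f = (\<lambda>X. \<Prod>c\<in>C. det (Wf c * NN m r c X))" using \<open>f \<in> F\<close> unfolding F_def by blast
      have "det (Wf c * NN m r c X) = 0" using cz Wf c by blast
      then show ?thesis unfolding f using finC c by (simp add: prod_zero_iff) blast
    qed
    then show "X \<in> {X \<in> M. \<forall>f\<in>F. f X = 0}" using X by auto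
  next
    fix X assume X: "X \<in> {X \<in> M. \<forall>f\<in>F. f X = 0}"
    show "X \<in> M - U"
    proof
      show "X \<in> M" using X by simp
      show "X \<notin> U"
      proof
        assume "X \<in> U"
        then have "\<forall>c\<in>C. \<exists>W. W \<in> carrier_mat (Suc r) m \<and> det (W * NN m r c X) \<noteq> 0" unfolding U_def by blast
        then obtain Wf where Wf: "\<And>c. c \<in> C \<Longrightarrow> Wf c \<in> carrier_mat (Suc r) m \<and> det (Wf c * NN m r c X) \<noteq> 0"
          by metis
        then have "(\<lambda>X. \<Prod>c\<in>C. det (Wf c * NN m r c X)) \<in> F" unfolding F_def by blast
        then have "(\<Prod>c\<in>C. det (Wf c * NN m r c X)) = 0" using X by auto
        then show False using Wf finC by (simp add: prod_zero_iff)
      qed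
    qed
  qed
  then have opn: "zariski_open_in m n M U"
    unfolding zariski_open_in_def zariski_closed_in_def using FP U_def by blast
  have dns: "zariski_dense_in m n M U"
    unfolding zariski_dense_in_def
  proof (intro conjI allI impI)
    show "U \<subseteq> M" unfolding U_def by blast
    fix Z assume Z: "zariski_closed_in m n M Z \<and> U \<subseteq> Z"
    then obtain G where G: "G \<subseteq> poly_fun m n" and ZG: "Z = {X \<in> M. \<forall>g\<in>G. g X = 0}"
      unfolding zariski_closed_in_def by blast
    have "\<forall>c\<in>C. \<exists>W. W \<in> carrier_mat (Suc r) m \<and> (\<exists>A\<in>carrier_mat m r. \<exists>B\<in>carrier_mat r n. det (W * NN m r c (A * B)) \<noteq> 0)"
      using witness assms(1) unfolding C_def by blast
    then obtain Wc where Wc: "\<And>c. c \<in> C \<Longrightarrow> Wc c \<in> carrier_mat (Suc r) m \<and>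
        (\<exists>A\<in>carrier_mat m r. \<exists>B\<in>carrier_mat r n. det (Wc c * NN m r c (A * B)) \<noteq> 0)" by metis
    have inM: "A * B \<in> M" if "A \<in> carrier_mat m r" "B \<in> carrier_mat r n" for A B
    proof -
      interpret V: vec_space "TYPE(complex)" m .
      have "V.rank (A * B) \<le> V.rank A" using V.rank_mult_le that by blast
      also have "\<dots> \<le> r" using V.rank_le_nc that by blast
      finally show ?thesis unfolding M_def low_rank_var_def using that by auto
    qed
    have "M \<subseteq> Z"
    proof
      fix X assume X: "X \<in> M"
      then have XC: "X \<in> carrier_mat m n" and rk: "vec_space.rank m X \<le> r"
        unfolding M_def low_rank_var_def by auto
      obtain A B where AB: "A \<in> carrier_mat m r" "B \<in> carrier_mat r n" "X = A * B"
        using factor_low_rank[OF XC rk] by blast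
      have "g X = 0" if g: "g \<in> G" for g
      proof -
        have "g (A * B) = 0"
        proof (rule density_core[of C "\<lambda>c X. det (Wc c * NN m r c X)" m n r g])
          show "finite C" by fact
          show "\<And>c. c \<in> C \<Longrightarrow> (\<lambda>X. det (Wc c * NN m r c X)) \<in> poly_fun m n"
            using Wc pf_det_NN unfolding C_def by blast
          show "\<And>c. c \<in> C \<Longrightarrow> \<exists>A\<in>carrier_mat m r. \<exists>B\<in>carrier_mat r n. det (Wc c * NN m r c (A * B)) \<noteq> 0"
            using Wc by blast
          show "g \<in> poly_fun m n" using G g by blast
          show "A \<in> carrier_mat m r" "B \<in> carrier_mat r n" by (fact AB)+
        next
          fix A' B' assume A': "A' \<in> carrier_mat m r" and B': "B' \<in> carrier_mat r n"
            and nz: "\<forall>c\<in>C. det (Wc c * NN m r c (A' * B')) \<noteq> 0"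
          have "A' * B' \<in> U" unfolding U_def using inM[OF A' B'] nz Wc by blast
          then have "A' * B' \<in> Z" using Z by blast
          then show "g (A' * B') = 0" using ZG g by blast
        qed
        then show ?thesis using AB by simp
      qed
      then show "X \<in> Z" using ZG X by blast
    qed
    then show "Z = M" using ZG by blast
  qed
  have prp: "vec_space.rank m (mat_of_cols m (col X j # map (\<lambda>k. P k *\<^sub>v col X (J k)) [0..<r])) = r + 1"
    if X: "X \<in> U" and j: "j < n" and hyp: "(\<forall>k<r. J k < n) \<and> inj_on J {..<r} \<and> j \<notin> J ` {..<r} \<and>
                (\<forall>k<r. P k \<in> perm_mats m) \<and> (\<exists>k<r. P k \<noteq> 1\<^sub>m m)" for X j J P
  proof -
    have XC: "X \<in> carrier_mat m n" using X unfolding U_def M_def low_rank_var_def by auto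
    obtain c where c: "c \<in> C" and eq: "mat_of_cols m (col X j # map (\<lambda>k. P k *\<^sub>v col X (J k)) [0..<r]) = NN m r c X"
      using combo_prop[OF XC j, of r J P] hyp unfolding C_def by blast
    obtain W where W: "W \<in> carrier_mat (Suc r) m" "det (W * NN m r c X) \<noteq> 0" using X c unfolding U_def by blast
    have "vec_space.rank m (NN m r c X) = Suc r" using rank_from_det[OF NN_carrier W] .
    then show ?thesis using eq by simp
  qed
  show ?thesis
    by (rule exI[of _ U]) (use opn dns prp in \<open>auto simp: M_def\<close>)
qed


end
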